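(* Let $V=\{1,\dots,n\}$ and let $F:2^V\to\mathbb{R}$ be a non-negative submodular set function with $F(\emptyset)=F(V)=0$. Define a directed graph $G=(V,E,c)$ with $E=\{(u,v)\in V\times V:u\neq v\}$ and $c_{uv}=\min\{F(A):A\subseteq V,\ u\in A,\ v\notin A\}$. Then for every $A\subseteq V$, \[\frac{1}{n^2/4}\,c^+(A)\le F(A)\le c^+(A).\] Moreover, if $F(A)\in\Delta\cdot\mathbb{Z}_{\ge0}$ for all $A$ for some $\Delta>0$, then every $c_{uv}$ is an integer multiple of $\Delta$.
   Context: For a weighted directed graph $(V,E,c)$, the cut function is $c^+(A)=\sum_{(u,v)\in E:\,u\in A,\,v\notin A}c_{uv}$ for $A\subseteq V$. *)

theory Defs
  imports "HOL-Analysis.Analysis"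
begin

definition submodular_on :: "'a set \<Rightarrow> ('a set \<Rightarrow> real) \<Rightarrow> bool" where
  "submodular_on V F \<longleftrightarrow>
     (\<forall>A B. A \<subseteq> V \<longrightarrow> B \<subseteq> V \<longrightarrow> F (A \<union> B) + F (A \<inter> B) \<le> F A + F B)"

definition cut_out :: "('a \<times> 'a) set \<Rightarrow> ('a \<Rightarrow> 'a \<Rightarrow> real) \<Rightarrow> 'a set \<Rightarrow> real" where
  "cut_out E c A = (\<Sum>(u,v)\<in>{(u,v)\<in>E. u \<in> A \<and> v \<notin> A}. c u v)"

definition complete_edges :: "'a set \<Rightarrow> ('a \<times> 'a) set" where
  "complete_edges V = {(u,v)\<in>V \<times> V. u \<noteq> v}"

definition cap_of :: "'a set \<Rightarrow> ('a set \<Rightarrow> real) \<Rightarrow> 'a \<Rightarrow> 'a \<Rightarrow> real" where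
  "cap_of V F u v = Min (F ` {A. A \<subseteq> V \<and> u \<in> A \<and> v \<notin> A})"

end

theory Submission
  imports Defs
begin

lemma sub_union:
  assumes "\<And>A. A \<subseteq> V \<Longrightarrow> F A \<ge> 0" "submodular_on V F" "A \<subseteq> V" "B \<subseteq> V"
  shows "F (A \<union> B) \<le> F A + F B"
proof -
  have "F (A \<union> B) + F (A \<inter> B) \<le> F A + F B" using assms unfolding submodular_on_def by blast
  moreover have "F (A \<inter> B) \<ge> 0" using assms by blast
  ultimately show ?thesis by linarith
qed

lemma sub_inter:
  assumes "\<And>A. A \<subseteq> V \<Longrightarrow> F A \<ge> 0" "submodular_on V F" "A \<subseteq> V" "B \<subseteq> V"
  shows "F (A \<inter> B) \<le> F A + F B"
proof -
  have "F (A \<union> B) + F (A \<inter> B) \<le> F A + F B" using assms unfolding submodular_on_def by blast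
  moreover have "F (A \<union> B) \<ge> 0" using assms by blast
  ultimately show ?thesis by linarith
qed

lemma sub_Union:
  assumes "\<And>A. A \<subseteq> V \<Longrightarrow> F A \<ge> 0" "submodular_on V F" "F {} = 0"
  shows "finite I \<Longrightarrow> (\<forall>i\<in>I. B i \<subseteq> V) \<Longrightarrow> F (\<Union>i\<in>I. B i) \<le> (\<Sum>i\<in>I. F (B i))"
proof (induction I rule: finite_induct)
  case empty then show ?case using assms by simp
next
  case (insert x I)
  have h1: "B x \<subseteq> V" "(\<Union>i\<in>I. B i) \<subseteq> V" using insert.prems by auto
  have ih: "F (\<Union>i\<in>I. B i) \<le> (\<Sum>i\<in>I. F (B i))" using insert.IH insert.prems by simp
  have "F (\<Union>i\<in>insert x I. B i) = F (B x \<union> (\<Union>i\<in>I. B i))" by simp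
  also have "\<dots> \<le> F (B x) + F (\<Union>i\<in>I. B i)"
    by (rule sub_union[OF assms(1,2) h1])
  also have "\<dots> \<le> F (B x) + (\<Sum>i\<in>I. F (B i))" using ih by simp
  also have "\<dots> = (\<Sum>i\<in>insert x I. F (B i))" using insert.hyps by simp
  finally show ?case .
qed

lemma sub_Inter:
  assumes "\<And>A. A \<subseteq> V \<Longrightarrow> F A \<ge> 0" "submodular_on V F"
  shows "finite I \<Longrightarrow> I \<noteq> {} \<Longrightarrow> (\<forall>i\<in>I. B i \<subseteq> V) \<Longrightarrow> F (\<Inter>i\<in>I. B i) \<le> (\<Sum>i\<in>I. F (B i))"
proof (induction I rule: finite_ne_induct)
  case (singleton x) then show ?case by simp
next
  case (insert x I)
  have hx: "B x \<subseteq> V" using insert.prems by simp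
  obtain j where j: "j \<in> I" using insert.hyps(2) by blast
  have "(\<Inter>i\<in>I. B i) \<subseteq> B j" using j by (rule INT_lower)
  also have "B j \<subseteq> V" using insert.prems j by simp
  finally have hI: "(\<Inter>i\<in>I. B i) \<subseteq> V" .
  have "F (\<Inter>i\<in>insert x I. B i) = F (B x \<inter> (\<Inter>i\<in>I. B i))" by simp
  also have "\<dots> \<le> F (B x) + F (\<Inter>i\<in>I. B i)"
    by (rule sub_inter[OF assms(1,2) hx hI])
  also have "\<dots> \<le> F (B x) + (\<Sum>i\<in>I. F (B i))" using insert.IH insert.prems by simp
  also have "\<dots> = (\<Sum>i\<in>insert x I. F (B i))" using insert.hyps by simp
  finally show ?case .
qed

lemma cut_eq:
  assumes "A \<subseteq> V"
  shows "cut_out (complete_edges V) c A = (\<Sum>u\<in>A. \<Sum>v\<in>V-A. c u v)"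
proof -
  have "{(u,v)\<in>complete_edges V. u \<in> A \<and> v \<notin> A} = A \<times> (V - A)"
    using assms unfolding complete_edges_def by auto
  then show ?thesis unfolding cut_out_def by (simp add: sum.cartesian_product)
qed

lemma cap_props:
  assumes "finite V" "u \<in> V" "v \<in> V" "u \<noteq> v"
  shows "\<exists>B. B \<subseteq> V \<and> u \<in> B \<and> v \<notin> B \<and> F B = cap_of V F u v"
    and "\<And>B. B \<subseteq> V \<Longrightarrow> u \<in> B \<Longrightarrow> v \<notin> B \<Longrightarrow> cap_of V F u v \<le> F B"
proof -
  let ?S = "{A. A \<subseteq> V \<and> u \<in> A \<and> v \<notin> A}"
  have fin: "finite ?S" by (rule finite_subset[of _ "Pow V"]) (use assms(1) in auto)
  have "{u} \<in> ?S" using assms by auto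
  then have ne: "?S \<noteq> {}" by blast
  have "Min (F ` ?S) \<in> F ` ?S" using fin ne by (intro Min_in) auto
  then obtain B0 where B0: "B0 \<in> ?S" "Min (F ` ?S) = F B0" by (rule imageE)
  then show "\<exists>B. B \<subseteq> V \<and> u \<in> B \<and> v \<notin> B \<and> F B = cap_of V F u v"
    unfolding cap_of_def by (intro exI[of _ B0]) simp
  fix B assume "B \<subseteq> V" "u \<in> B" "v \<notin> B"
  then have "F B \<in> F ` ?S" by (intro imageI) simp
  then show "cap_of V F u v \<le> F B" unfolding cap_of_def by (rule Min_le[OF finite_imageI[OF fin]])
qed

theorem mainTheorem7:
  fixes n :: nat and F :: "nat set \<Rightarrow> real"
  defines "V \<equiv> {1..n}"
  assumes nonneg: "\<And>A. A \<subseteq> V \<Longrightarrow> F A \<ge> 0"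
    and submod: "submodular_on V F"
    and empty0: "F {} = 0"
    and full0: "F V = 0"
  shows "(\<forall>A. A \<subseteq> V \<longrightarrow>
           1 / (real n ^ 2 / 4) * cut_out (complete_edges V) (cap_of V F) A \<le> F A
           \<and> F A \<le> cut_out (complete_edges V) (cap_of V F) A)
         \<and> (\<forall>\<Delta>::real. \<Delta> > 0 \<longrightarrow> (\<forall>A. A \<subseteq> V \<longrightarrow> (\<exists>k::nat. F A = \<Delta> * real k)) \<longrightarrow>
           (\<forall>(u,v)\<in>complete_edges V. \<exists>m::int. cap_of V F u v = \<Delta> * real_of_int m))"
proof (intro conjI allI impI)
  have finV: "finite V" unfolding V_def by simp
  have cardV: "card V = n" unfolding V_def by simp
  fix A assume AV: "A \<subseteq> V"
  have finA: "finite A" using finV AV finite_subset by blast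
  let ?c = "cut_out (complete_edges V) (cap_of V F) A"
  have ceq: "?c = (\<Sum>u\<in>A. \<Sum>v\<in>V-A. cap_of V F u v)" by (rule cut_eq[OF AV])
  have "?c \<le> (\<Sum>u\<in>A. \<Sum>v\<in>V-A. F A)" unfolding ceq
    apply (intro sum_mono)
    apply (rule cap_props(2)[OF finV]) using AV by auto
  also have "\<dots> = real (card A * card (V - A)) * F A" by simp
  also have "\<dots> \<le> real n ^ 2 / 4 * F A"
  proof (rule mult_right_mono)
    have "card A + card (V - A) = n" using card_Diff_subset[OF finA AV] card_mono[OF finV AV] cardV by simp
    then have nn: "real n = real (card A) + real (card (V - A))" by simp
    have "0 \<le> (real (card A) - real (card (V - A)))^2" by simp
    then have "4 * (real (card A) * real (card (V - A))) \<le> (real (card A) + real (card (V - A)))^2"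
      by (simp add: power2_eq_square algebra_simps)
    then have "4 * (real (card A) * real (card (V - A))) \<le> (real n)^2" using nn by simp
    then show "real (card A * card (V - A)) \<le> real n ^ 2 / 4" by simp
    show "0 \<le> F A" using nonneg AV by simp
  qed
  finally have cle: "?c \<le> real n ^ 2 / 4 * F A" .
  show "1 / (real n ^ 2 / 4) * ?c \<le> F A"
  proof (cases "n = 0")
    case True then show ?thesis using nonneg AV by simp
  next
    case False
    then have "real n ^ 2 / 4 > 0" by simp
    then show ?thesis using cle by (simp add: field_simps)
  qed
  show "F A \<le> ?c"
  proof (cases "A = V")
    case True
    then show ?thesis unfolding ceq using full0 by simp
  next
    case False
    then have ne: "V - A \<noteq> {}" using AV by auto
    define S where "S u v = (SOME B. B \<subseteq> V \<and> u \<in> B \<and> v \<notin> B \<and> F B = cap_of V F u v)" for u v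
    have S: "S u v \<subseteq> V \<and> u \<in> S u v \<and> v \<notin> S u v \<and> F (S u v) = cap_of V F u v"
      if "u \<in> A" "v \<in> V - A" for u v
      unfolding S_def apply (rule someI_ex) apply (rule cap_props(1)[OF finV]) using that AV by auto
    have Aeq: "A = (\<Union>u\<in>A. \<Inter>v\<in>V-A. S u v)"
    proof
      show "A \<subseteq> (\<Union>u\<in>A. \<Inter>v\<in>V-A. S u v)" using S by blast
      show "(\<Union>u\<in>A. \<Inter>v\<in>V-A. S u v) \<subseteq> A"
      proof
        fix x assume "x \<in> (\<Union>u\<in>A. \<Inter>v\<in>V-A. S u v)"
        then obtain u where u: "u \<in> A" "\<forall>v\<in>V-A. x \<in> S u v" by blast
        obtain v0 where v0: "v0 \<in> V - A" using ne by blast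
        have "x \<in> V" using u S[OF u(1) v0] v0 by blast
        moreover have "x \<notin> V - A" using u S[OF u(1)] by blast
        ultimately show "x \<in> A" by blast
      qed
    qed
    have hU: "\<forall>u\<in>A. (\<Inter>v\<in>V-A. S u v) \<subseteq> V"
    proof
      fix u assume u: "u \<in> A"
      obtain v0 where v0: "v0 \<in> V - A" using ne by blast
      have "(\<Inter>v\<in>V-A. S u v) \<subseteq> S u v0" using v0 by blast
      also have "\<dots> \<subseteq> V" using S[OF u v0] by blast
      finally show "(\<Inter>v\<in>V-A. S u v) \<subseteq> V" .
    qed
    have "F A = F (\<Union>u\<in>A. \<Inter>v\<in>V-A. S u v)" using Aeq by (rule arg_cong)
    also have "\<dots> \<le> (\<Sum>u\<in>A. F (\<Inter>v\<in>V-A. S u v))"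
      by (rule sub_Union[OF nonneg submod empty0 finA hU])
    also have "\<dots> \<le> (\<Sum>u\<in>A. \<Sum>v\<in>V-A. F (S u v))"
      apply (rule sum_mono) apply (rule sub_Inter[OF nonneg submod])
      using finV ne S by auto
    also have "\<dots> = ?c" unfolding ceq by (intro sum.cong refl) (simp add: S)
    finally show ?thesis .
  qed
next
  have finV: "finite V" unfolding V_def by simp
  fix \<Delta> :: real
  assume "\<Delta> > 0" and H: "\<forall>A. A \<subseteq> V \<longrightarrow> (\<exists>k::nat. F A = \<Delta> * real k)"
  show "\<forall>(u,v)\<in>complete_edges V. \<exists>m::int. cap_of V F u v = \<Delta> * real_of_int m"
  proof (clarify)
    fix u v assume "(u, v) \<in> complete_edges V"
    then have "u \<in> V" "v \<in> V" "u \<noteq> v" unfolding complete_edges_def by auto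
    then obtain B where B: "B \<subseteq> V" "F B = cap_of V F u v" using cap_props(1)[OF finV] by blast
    then obtain k :: nat where "F B = \<Delta> * real k" using H by blast
    then show "\<exists>m::int. cap_of V F u v = \<Delta> * real_of_int m" using B by (intro exI[of _ "int k"]) simp
  qed
qed

end
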